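(* Let $\phi$ be an instance of MonLinNAE3SAT, and let $\mathcal{G}$ be the lifetime-1 temporal graph constructed from $\phi$, with sources $s$ and $s'$. If $\mathcal{G}$ admits a solution of \textsc{ReachFast} with sources $\{s,s'\}$ of value at most $6$, then $\phi$ has a not-all-equal satisfying assignment.
   Context: MonLinNAE3SAT instance: a CNF formula $\phi$ on variables $x_1,\dots,x_n$ with clauses $c_1,\dots,c_m$. Every clause has exactly three distinct literals, every variable appears exactly four times, there are no negations, and any two clauses share at most one variable. A not-all-equal satisfying assignment makes, in every clause, at least one literal true and at least one literal false. Construction of $\mathcal{G}$. All edges have the single label $1$. The vertices and edges are as follows. - Sources $s,s'$. - For each clause $c_j$: vertices $a_j,a'_j,z_j,z'_j$ and edges $sa_j$, $s'a'_j$, $a_jz_j$, $a'_jz'_j$. - For each variable $x_i$: vertices $b_i,b'_i,w_i$ and edges $b_iw_i$, $w_ib'_i$. - If $x_i$ appears in $c_j$: edges $a_jb_i$ and $a'_jb'_i$. - If $x_i$ and $x_k$ appear in a common clause: edges $b_ib_k$, $b'_ib'_k$, $w_iw_k$. - A ladder on vertices $p_1,\dots,p_5,q_1,\dots,q_5$ with edges $sp_1$, $sq_1$, $s'p_5$, $s'q_5$, $p_ip_{i+1}$ and $q_iq_{i+1}$ for $i\in[4]$, and $p_iq_i$ for $i\in[5]$. Temporal graph notions. A temporal graph has edge sets $E_1,\dots,E_{t_{\max}}$, and an edge has label $i$ if it lies in $E_i$. A temporal path uses edges with strictly increasing labels; its arrival time is its last label. $\mathrm{reachtime}(v,\cdot)$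 is the least $t$ such that $v$ reaches every vertex by time $t$. Delaying a label $i$ by a positive integer $\delta$ replaces it by $i+\delta$. A solution for sources $S$ is a temporal graph obtained by delaying labels in which every source reaches every vertex; its value is $\max_{v\in S}\mathrm{reachtime}(v,\cdot)$. *)

theory Defs
  imports Main
begin

text \<open>A MonLinNAE3SAT instance: variables x_0..x_(n-1), clauses c_0..c_(m-1),
  clause j given as the set C j of (indices of) its three variables (all positive).\<close>

definition MonLinNAE3SAT :: "nat \<Rightarrow> nat \<Rightarrow> (nat \<Rightarrow> nat set) \<Rightarrow> bool" where
  "MonLinNAE3SAT n m C \<longleftrightarrow>
     (\<forall>j<m. C j \<subseteq> {..<n} \<and> card (C j) = 3) \<and>
     (\<forall>i<n. card {j. j < m \<and> i \<in> C j} = 4) \<and>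
     (\<forall>j<m. \<forall>k<m. j \<noteq> k \<longrightarrow> card (C j \<inter> C k) \<le> 1)"

definition NAE_satisfiable :: "nat \<Rightarrow> (nat \<Rightarrow> nat set) \<Rightarrow> bool" where
  "NAE_satisfiable m C \<longleftrightarrow>
     (\<exists>\<sigma> :: nat \<Rightarrow> bool. \<forall>j<m. (\<exists>i\<in>C j. \<sigma> i) \<and> (\<exists>i\<in>C j. \<not> \<sigma> i))"

datatype vertex = Src | Src' | A nat | A' nat | Z nat | Z' nat
  | B nat | B' nat | W nat | P nat | Q nat

definition GV :: "nat \<Rightarrow> nat \<Rightarrow> vertex set" where
  "GV n m = {Src, Src'} \<union> (\<Union>j\<in>{..<m}. {A j, A' j, Z j, Z' j})
     \<union> (\<Union>i\<in>{..<n}. {B i, B' i, W i}) \<union> (\<Union>k\<in>{1..5}. {P k, Q k})"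

definition GE :: "nat \<Rightarrow> nat \<Rightarrow> (nat \<Rightarrow> nat set) \<Rightarrow> vertex set set" where
  "GE n m C =
     (\<Union>j\<in>{..<m}. {{Src, A j}, {Src', A' j}, {A j, Z j}, {A' j, Z' j}})
   \<union> (\<Union>i\<in>{..<n}. {{B i, W i}, {W i, B' i}})
   \<union> {{A j, B i} | i j. i < n \<and> j < m \<and> i \<in> C j}
   \<union> {{A' j, B' i} | i j. i < n \<and> j < m \<and> i \<in> C j}
   \<union> (\<Union>{{{B i, B k}, {B' i, B' k}, {W i, W k}} | i k.
        i < n \<and> k < n \<and> i \<noteq> k \<and> (\<exists>j<m. i \<in> C j \<and> k \<in> C j)})
   \<union> {{Src, P 1}, {Src, Q 1}, {Src', P 5}, {Src', Q 5}}
   \<union> (\<Union>k\<in>{1..4}. {{P k, P (Suc k)}, {Q k, Q (Suc k)}})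
   \<union> (\<Union>k\<in>{1..5}. {{P k, Q k}})"

definition tpath :: "vertex set set \<Rightarrow> (vertex set \<Rightarrow> nat) \<Rightarrow> vertex list \<Rightarrow> bool" where
  "tpath Es lam vs \<longleftrightarrow> vs \<noteq> [] \<and> distinct vs \<and>
     (\<forall>i. Suc i < length vs \<longrightarrow> {vs ! i, vs ! Suc i} \<in> Es) \<and>
     (\<forall>i. Suc (Suc i) < length vs \<longrightarrow>
        lam {vs ! i, vs ! Suc i} < lam {vs ! Suc i, vs ! Suc (Suc i)})"

definition arrival :: "(vertex set \<Rightarrow> nat) \<Rightarrow> vertex list \<Rightarrow> nat" where
  "arrival lam vs = (if length vs < 2 then 0
      else lam {vs ! (length vs - 2), vs ! (length vs - 1)})"

definition reaches_by :: "vertex set set \<Rightarrow> (vertex set \<Rightarrow> nat) \<Rightarrow> vertex \<Rightarrow> vertex \<Rightarrow> nat \<Rightarrow> bool" where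
  "reaches_by Es lam u v t \<longleftrightarrow>
     (\<exists>vs. tpath Es lam vs \<and> hd vs = u \<and> last vs = v \<and> arrival lam vs \<le> t)"

definition reachtime :: "vertex set \<Rightarrow> vertex set set \<Rightarrow> (vertex set \<Rightarrow> nat) \<Rightarrow> vertex \<Rightarrow> nat" where
  "reachtime V Es lam u = (LEAST t. \<forall>v\<in>V. reaches_by Es lam u v t)"

text \<open>A solution for sources Srcs of the lifetime-1 graph: every edge label 1 is kept or
  delayed by a positive integer, i.e. the new label is any lam e \<ge> 1; every source reaches
  every vertex.\<close>
definition is_solution :: "vertex set \<Rightarrow> vertex set set \<Rightarrow> vertex set \<Rightarrow> (vertex set \<Rightarrow> nat) \<Rightarrow> bool" where
  "is_solution V Es Srcs lam \<longleftrightarrow> (\<forall>e\<in>Es. 1 \<le> lam e) \<and>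
     (\<forall>u\<in>Srcs. \<forall>v\<in>V. \<exists>t. reaches_by Es lam u v t)"

definition sol_value :: "vertex set \<Rightarrow> vertex set set \<Rightarrow> vertex set \<Rightarrow> (vertex set \<Rightarrow> nat) \<Rightarrow> nat" where
  "sol_value V Es Srcs lam = Max (reachtime V Es lam ` Srcs)"

end

theory Submission imports Defs begin

fun d1 :: "vertex \<Rightarrow> nat" where
  "d1 Src = 0" | "d1 (A _) = 1" | "d1 (Z _) = 2" | "d1 (B _) = 2" | "d1 (W _) = 3"
| "d1 (B' _) = 4" | "d1 (A' _) = 5" | "d1 (Z' _) = 6" | "d1 Src' = 6"
| "d1 (P k) = k" | "d1 (Q k) = k"

fun d2 :: "vertex \<Rightarrow> nat" where
  "d2 Src' = 0" | "d2 (A' _) = 1" | "d2 (Z' _) = 2" | "d2 (B' _) = 2" | "d2 (W _) = 3"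
| "d2 (B _) = 4" | "d2 (A _) = 5" | "d2 (Z _) = 6" | "d2 Src = 6"
| "d2 (P k) = 6 - k" | "d2 (Q k) = 6 - k"

lemma d1_lip: "e \<in> GE n m C \<Longrightarrow> x \<in> e \<Longrightarrow> y \<in> e \<Longrightarrow> d1 y \<le> d1 x + 1"
  unfolding GE_def by auto

lemma d2_lip: "e \<in> GE n m C \<Longrightarrow> x \<in> e \<Longrightarrow> y \<in> e \<Longrightarrow> d2 y \<le> d2 x + 1"
  unfolding GE_def by auto

lemma nZ': "{x, Z' j} \<in> GE n m C \<Longrightarrow> x = A' j"
  unfolding GE_def by (auto simp: doubleton_eq_iff)
lemma nZ: "{x, Z j} \<in> GE n m C \<Longrightarrow> x = A j"
  unfolding GE_def by (auto simp: doubleton_eq_iff)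
lemma nA': "{x, A' j} \<in> GE n m C \<Longrightarrow> x = Src' \<or> x = Z' j \<or> (\<exists>i. x = B' i \<and> i \<in> C j)"
  unfolding GE_def by (auto simp: doubleton_eq_iff)
lemma nA: "{x, A j} \<in> GE n m C \<Longrightarrow> x = Src \<or> x = Z j \<or> (\<exists>i. x = B i \<and> i \<in> C j)"
  unfolding GE_def by (auto simp: doubleton_eq_iff)
lemma nB': "{x, B' i} \<in> GE n m C \<Longrightarrow> x = W i \<or> (\<exists>j. x = A' j) \<or> (\<exists>k. x = B' k)"
  unfolding GE_def by (auto simp: doubleton_eq_iff)
lemma nB: "{x, B i} \<in> GE n m C \<Longrightarrow> x = W i \<or> (\<exists>j. x = A j) \<or> (\<exists>k. x = B k)"
  unfolding GE_def by (auto simp: doubleton_eq_iff)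
lemma nW: "{x, W i} \<in> GE n m C \<Longrightarrow> x = B i \<or> x = B' i \<or> (\<exists>k. x = W k)"
  unfolding GE_def by (auto simp: doubleton_eq_iff)

lemma key:
  fixes d :: "vertex \<Rightarrow> nat"
  assumes tp: "tpath Es lam vs" and h: "hd vs = u" and l: "last vs = v"
    and ar: "arrival lam vs \<le> 6" and pos: "\<forall>e\<in>Es. 1 \<le> lam e"
    and du: "d u = 0" and dv: "d v = 6"
    and lip: "\<And>e x y. e \<in> Es \<Longrightarrow> x \<in> e \<Longrightarrow> y \<in> e \<Longrightarrow> d y \<le> d x + 1"
  shows "length vs = 7 \<and> (\<forall>k<7. d (vs!k) = k) \<and> (\<forall>k<6. lam {vs!k, vs!Suc k} = Suc k)"
proof -
  have ne: "vs \<noteq> []" and ed: "\<And>i. Suc i < length vs \<Longrightarrow> {vs ! i, vs ! Suc i} \<in> Es"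
    and inc: "\<And>i. Suc (Suc i) < length vs \<Longrightarrow>
        lam {vs ! i, vs ! Suc i} < lam {vs ! Suc i, vs ! Suc (Suc i)}"
    using tp unfolding tpath_def by auto
  have dle: "k < length vs \<Longrightarrow> d (vs!k) \<le> k" for k
  proof (induction k)
    case 0 then show ?case using h du ne by (simp add: hd_conv_nth)
  next
    case (Suc k)
    have "d (vs ! Suc k) \<le> d (vs!k) + 1" using lip[OF ed[OF Suc.prems]] by auto
    then show ?case using Suc by simp
  qed
  have lastn: "last vs = vs ! (length vs - 1)" using ne by (simp add: last_conv_nth)
  have L6: "length vs \<ge> 7" using dle[of "length vs - 1"] ne dv l lastn by fastforce
  have lge: "Suc k < length vs \<Longrightarrow> lam {vs!k, vs!Suc k} \<ge> Suc k" for k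
  proof (induction k)
    case 0 then show ?case using pos ed by auto
  next
    case (Suc k)
    then show ?case using inc[OF Suc.prems] by fastforce
  qed
  have "arrival lam vs = lam {vs ! (length vs - 2), vs ! (length vs - 1)}"
    using L6 unfolding arrival_def by simp
  moreover have "lam {vs ! (length vs - 2), vs ! Suc (length vs - 2)} \<ge> length vs - 1"
  proof -
    have "Suc (length vs - 2) < length vs" "Suc (length vs - 2) = length vs - 1" using L6 by auto
    then show ?thesis using lge[of "length vs - 2"] by simp
  qed
  moreover have "Suc (length vs - 2) = length vs - 1" using L6 by simp
  ultimately have len: "length vs = 7" using ar L6 by simp
  have lup: "j \<le> 5 \<Longrightarrow> lam {vs!(5-j), vs!(6-j)} \<le> 6 - j" for j
  proof (induction j)
    case 0 then show ?case using ar len unfolding arrival_def by simp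
  next
    case (Suc j)
    have "lam {vs ! (5 - Suc j), vs ! Suc (5 - Suc j)} < lam {vs ! Suc (5 - Suc j), vs ! Suc (Suc (5 - Suc j))}"
      using inc len Suc.prems by simp
    moreover have "Suc (5 - Suc j) = 5 - j" "Suc (Suc (5 - Suc j)) = 6 - j" "6 - Suc j = 5 - j"
      using Suc.prems by auto
    ultimately show ?case using Suc by simp
  qed
  have lab: "\<forall>k<6. lam {vs!k, vs!Suc k} = Suc k"
  proof (intro allI impI)
    fix k :: nat assume k: "k < 6"
    have "lam {vs!(5-(5-k)), vs!(6-(5-k))} \<le> 6 - (5-k)" using lup[of "5-k"] by simp
    moreover have "5-(5-k) = k" "6-(5-k) = Suc k" "6 - (5-k) = Suc k" using k by auto
    ultimately show "lam {vs!k, vs!Suc k} = Suc k" using lge[of k] len k by simp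
  qed
  have dge: "j \<le> 6 \<Longrightarrow> d (vs!(6-j)) \<ge> 6 - j" for j
  proof (induction j)
    case 0 then show ?case using dv l lastn len by simp
  next
    case (Suc j)
    have e: "{vs ! (6 - Suc j), vs ! Suc (6 - Suc j)} \<in> Es" using ed len Suc.prems by simp
    have "Suc (6 - Suc j) = 6 - j" using Suc.prems by simp
    with lip[OF e] have "d (vs!(6-j)) \<le> d (vs!(6 - Suc j)) + 1" by auto
    then show ?case using Suc by simp
  qed
  have "\<forall>k<7. d (vs!k) = k"
  proof (intro allI impI)
    fix k :: nat assume k: "k < 7"
    have "d (vs!(6-(6-k))) \<ge> 6-(6-k)" using dge[of "6-k"] by simp
    moreover have "6-(6-k) = k" using k by simp
    ultimately show "d (vs!k) = k" using dle[of k] len k by simp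
  qed
  then show ?thesis using len lab by simp
qed

lemma finite_GV: "finite (GV n m)" unfolding GV_def by auto

lemma reach6:
  assumes sol: "is_solution (GV n m) (GE n m C) {Src, Src'} lam"
    and val: "sol_value (GV n m) (GE n m C) {Src, Src'} lam \<le> 6"
    and u: "u \<in> {Src, Src'}" and v: "v \<in> GV n m"
  shows "reaches_by (GE n m C) lam u v 6"
proof -
  let ?V = "GV n m" and ?E = "GE n m C"
  have mono: "reaches_by ?E lam u w t \<Longrightarrow> t \<le> t' \<Longrightarrow> reaches_by ?E lam u w t'" for w t t'
    unfolding reaches_by_def by fastforce
  have "\<forall>w\<in>?V. \<exists>t. reaches_by ?E lam u w t" using sol u unfolding is_solution_def by blast
  then obtain f where f: "\<forall>w\<in>?V. reaches_by ?E lam u w (f w)" by metis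
  have "\<forall>w\<in>?V. reaches_by ?E lam u w (sum f ?V)"
  proof
    fix w assume w: "w \<in> ?V"
    have "f w \<le> sum f ?V" using member_le_sum[OF w _ finite_GV, of f] by simp
    then show "reaches_by ?E lam u w (sum f ?V)" using f w mono by blast
  qed
  then have ex: "\<exists>t. \<forall>w\<in>?V. reaches_by ?E lam u w t" by blast
  have rt: "\<forall>w\<in>?V. reaches_by ?E lam u w (reachtime ?V ?E lam u)"
    unfolding reachtime_def by (rule LeastI_ex[OF ex])
  have "reachtime ?V ?E lam u \<le> sol_value ?V ?E {Src, Src'} lam"
    unfolding sol_value_def using u by (intro Max_ge) auto
  with val rt v mono show ?thesis by blast
qed

theorem lemma2:
  fixes n m :: nat and C :: "nat \<Rightarrow> nat set" and lam :: "vertex set \<Rightarrow> nat"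
  assumes "MonLinNAE3SAT n m C"
    and "is_solution (GV n m) (GE n m C) {Src, Src'} lam"
    and "sol_value (GV n m) (GE n m C) {Src, Src'} lam \<le> 6"
  shows "NAE_satisfiable m C"
  unfolding NAE_satisfiable_def
proof (intro exI allI impI conjI)
  fix j assume j: "j < m"
  have pos: "\<forall>e\<in>GE n m C. 1 \<le> lam e" using assms(2) unfolding is_solution_def by blast
  have "Z' j \<in> GV n m" using j unfolding GV_def by auto
  from reach6[OF assms(2,3) _ this]
  obtain vs where tp: "tpath (GE n m C) lam vs" and h: "hd vs = Src" and l: "last vs = Z' j"
    and ar: "arrival lam vs \<le> 6" unfolding reaches_by_def by auto
  have K: "length vs = 7 \<and> (\<forall>k<7. d1 (vs!k) = k) \<and> (\<forall>k<6. lam {vs!k, vs!Suc k} = Suc k)"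
    by (rule key[OF tp h l ar pos]) (simp, simp, erule (2) d1_lip)
  then have len: "length vs = 7" and dk: "\<forall>k<7. d1 (vs!k) = k"
    and lk: "\<forall>k<6. lam {vs!k, vs!Suc k} = Suc k" by auto
  have ed: "\<And>i. Suc i < 7 \<Longrightarrow> {vs ! i, vs ! Suc i} \<in> GE n m C"
    using tp len unfolding tpath_def by auto
  have "vs!6 = Z' j" proof -
    have "vs \<noteq> []" using len by auto
    then have "last vs = vs ! (length vs - 1)" by (rule last_conv_nth)
    then show ?thesis using l len by simp
  qed
  then have v5: "vs!5 = A' j" using ed[of 5] nZ' by simp
  have d4: "d1 (vs!4) = 4" "d1 (vs!3) = 3" "d1 (vs!2) = 2" using dk by auto
  have "vs!4 = Src' \<or> vs!4 = Z' j \<or> (\<exists>i. vs!4 = B' i \<and> i \<in> C j)"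
    using ed[of 4] v5 nA' by simp
  then obtain i where v4: "vs!4 = B' i" and iC: "i \<in> C j" using d4(1) by auto
  have "vs!3 = W i \<or> (\<exists>j. vs!3 = A' j) \<or> (\<exists>k. vs!3 = B' k)"
    using ed[of 3] v4 nB' by simp
  then have v3: "vs!3 = W i" using d4(2) by auto
  have "vs!2 = B i \<or> vs!2 = B' i \<or> (\<exists>k. vs!2 = W k)"
    using ed[of 2] v3 nW by simp
  then have v2: "vs!2 = B i" using d4(3) by auto
  have "lam {vs!2, vs!Suc 2} = Suc 2" using lk[rule_format, of 2] by simp
  then have "lam {B i, W i} = 3" using v2 v3 by simp
  then show "\<exists>i\<in>C j. lam {B i, W i} = 3" using iC by blast
next
  fix j assume j: "j < m"
  have pos: "\<forall>e\<in>GE n m C. 1 \<le> lam e" using assms(2) unfolding is_solution_def by blast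
  have "Z j \<in> GV n m" using j unfolding GV_def by auto
  from reach6[OF assms(2,3) _ this]
  obtain vs where tp: "tpath (GE n m C) lam vs" and h: "hd vs = Src'" and l: "last vs = Z j"
    and ar: "arrival lam vs \<le> 6" unfolding reaches_by_def by auto
  have K: "length vs = 7 \<and> (\<forall>k<7. d2 (vs!k) = k) \<and> (\<forall>k<6. lam {vs!k, vs!Suc k} = Suc k)"
    by (rule key[OF tp h l ar pos]) (simp, simp, erule (2) d2_lip)
  then have len: "length vs = 7" and dk: "\<forall>k<7. d2 (vs!k) = k"
    and lk: "\<forall>k<6. lam {vs!k, vs!Suc k} = Suc k" by auto
  have ed: "\<And>i. Suc i < 7 \<Longrightarrow> {vs ! i, vs ! Suc i} \<in> GE n m C"
    using tp len unfolding tpath_def by auto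
  have "vs!6 = Z j" proof -
    have "vs \<noteq> []" using len by auto
    then have "last vs = vs ! (length vs - 1)" by (rule last_conv_nth)
    then show ?thesis using l len by simp
  qed
  then have v5: "vs!5 = A j" using ed[of 5] nZ by simp
  have d4: "d2 (vs!4) = 4" "d2 (vs!3) = 3" using dk by auto
  have "vs!4 = Src \<or> vs!4 = Z j \<or> (\<exists>i. vs!4 = B i \<and> i \<in> C j)"
    using ed[of 4] v5 nA by simp
  then obtain i where v4: "vs!4 = B i" and iC: "i \<in> C j" using d4(1) by auto
  have "vs!3 = W i \<or> (\<exists>j. vs!3 = A j) \<or> (\<exists>k. vs!3 = B k)"
    using ed[of 3] v4 nB by simp
  then have v3: "vs!3 = W i" using d4(2) by auto
  have "lam {vs!3, vs!Suc 3} = Suc 3" using lk[rule_format, of 3] by simp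
  then have "lam {W i, B i} = 4" using v4 v3 by simp
  then have "lam {B i, W i} \<noteq> 3" by (simp add: insert_commute)
  then show "\<exists>i\<in>C j. \<not> lam {B i, W i} = 3" using iC by blast
qed

end
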